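(* For all integers $r\ge 3$ and $n\ge r+12$, \[ \log m(n,r) \le \frac{1}{n-r+1}\binom{n}{r}\log\bigl(\mathrm{e}(n-r+1)\bigr). \]
   Context: $m(n,r)$ denotes the number of matroids of rank $r$ on the ground set $[n]=\{1,\dots,n\}$. $\log$ is the logarithm to base $2$ and $\mathrm{e}$ is Euler's number. *)

theory Defs
  imports "HOL-Analysis.Analysis"
begin

definition matroid_bases :: "'a set \<Rightarrow> 'a set set \<Rightarrow> bool" where
  "matroid_bases E B \<longleftrightarrow>
     B \<noteq> {} \<and> (\<forall>X\<in>B. X \<subseteq> E) \<and>
     (\<forall>X\<in>B. \<forall>Y\<in>B. \<forall>x\<in>X - Y. \<exists>y\<in>Y - X. insert y (X - {x}) \<in> B)"

definition matroid_count :: "nat \<Rightarrow> nat \<Rightarrow> nat" where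
  "matroid_count n r =
     card {B. matroid_bases {1..n} B \<and> (\<forall>X\<in>B. card X = r)}"

end

theory Submission
  imports Defs
begin


lemma gm_super:
  fixes a b :: "'i \<Rightarrow> real"
  assumes J: "finite J" "J \<noteq> {}" and a: "\<And>i. i \<in> J \<Longrightarrow> a i \<ge> 0" and b: "\<And>i. i \<in> J \<Longrightarrow> b i \<ge> 0"
  shows "(\<Prod>i\<in>J. a i) powr (1 / card J) + (\<Prod>i\<in>J. b i) powr (1 / card J)
         \<le> (\<Prod>i\<in>J. a i + b i) powr (1 / card J)"
proof (cases "\<exists>i\<in>J. a i + b i = 0")
  case True
  then obtain i where i: "i \<in> J" "a i + b i = 0" by blast
  then have "a i = 0" "b i = 0" using a b by (auto simp: add_nonneg_eq_0_iff)
  then have "(\<Prod>i\<in>J. a i) = 0" "(\<Prod>i\<in>J. b i) = 0" using i J by (auto intro: prod_zero)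
  then show ?thesis by simp
next
  case False
  define c where "c i = a i + b i" for i
  have cpos: "\<And>i. i \<in> J \<Longrightarrow> c i > 0" using False a b unfolding c_def
    by (metis add_nonneg_nonneg order_le_less)
  let ?k = "1 / real (card J)"
  have cardpos: "card J > 0" using J by (simp add: card_gt_0_iff)
  have A: "(\<Prod>i\<in>J. a i / c i) powr ?k \<le> (\<Sum>i\<in>J. (a i / c i) / card J)"
    by (rule arith_geom_mean) (use J a cpos in \<open>auto intro: divide_nonneg_pos\<close>)
  have B: "(\<Prod>i\<in>J. b i / c i) powr ?k \<le> (\<Sum>i\<in>J. (b i / c i) / card J)"
    by (rule arith_geom_mean) (use J b cpos in \<open>auto intro: divide_nonneg_pos\<close>)
  have S: "(\<Sum>i\<in>J. (a i / c i) / card J) + (\<Sum>i\<in>J. (b i / c i) / card J) = 1"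
  proof -
    have "(\<Sum>i\<in>J. (a i / c i) / card J) + (\<Sum>i\<in>J. (b i / c i) / card J)
        = (\<Sum>i\<in>J. 1 / card J)"
      unfolding sum.distrib[symmetric]
    proof (rule sum.cong)
      fix i assume i: "i \<in> J"
      have "a i / c i + b i / c i = 1" using cpos[OF i] by (simp add: c_def add_divide_distrib[symmetric])
      then show "a i / c i / real (card J) + b i / c i / real (card J) = 1 / real (card J)"
        by (metis add_divide_distrib)
    qed simp
    also have "\<dots> = 1" using cardpos by simp
    finally show ?thesis .
  qed
  have Pc: "(\<Prod>i\<in>J. c i) > 0" using cpos by (simp add: prod_pos)
  have ea: "(\<Prod>i\<in>J. a i) = (\<Prod>i\<in>J. a i / c i) * (\<Prod>i\<in>J. c i)"
    using cpos by (simp add: prod.distrib[symmetric]) (rule prod.cong, auto dest: cpos)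
  have eb: "(\<Prod>i\<in>J. b i) = (\<Prod>i\<in>J. b i / c i) * (\<Prod>i\<in>J. c i)"
    using cpos by (simp add: prod.distrib[symmetric]) (rule prod.cong, auto dest: cpos)
  have na: "(\<Prod>i\<in>J. a i / c i) \<ge> 0" using a cpos by (intro prod_nonneg) (simp add: less_imp_le)
  have nb: "(\<Prod>i\<in>J. b i / c i) \<ge> 0" using b cpos by (intro prod_nonneg) (simp add: less_imp_le)
  have "(\<Prod>i\<in>J. a i) powr ?k + (\<Prod>i\<in>J. b i) powr ?k
      = ((\<Prod>i\<in>J. a i / c i) powr ?k + (\<Prod>i\<in>J. b i / c i) powr ?k) * (\<Prod>i\<in>J. c i) powr ?k"
    using na nb Pc by (simp add: ea eb powr_mult distrib_right)
  also have "\<dots> \<le> 1 * (\<Prod>i\<in>J. c i) powr ?k"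
    using A B S by (intro mult_right_mono) auto
  finally show ?thesis by (simp add: c_def)
qed

lemma pow_powr_inv:
  fixes x :: real assumes "x \<ge> 0" "r > 0"
  shows "(x ^ r) powr (1 / real r) = x" "(x powr (1 / real r)) ^ r = x"
proof -
  have rr: "real r > 0" using assms by simp
  show "(x ^ r) powr (1 / real r) = x"
  proof (cases "x = 0")
    case False
    then have "x > 0" using assms by simp
    then have "x ^ r = x powr real r" by (simp add: powr_realpow)
    then show ?thesis using rr \<open>x > 0\<close> by (simp add: powr_powr)
  qed (use assms in simp)
  show "(x powr (1 / real r)) ^ r = x"
  proof (cases "x = 0")
    case False
    then have "x > 0" using assms by simp
    then have "(x powr (1 / real r)) ^ r = (x powr (1 / real r)) powr real r" by (simp add: powr_realpow)
    then show ?thesis using rr \<open>x > 0\<close> by (simp add: powr_powr)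
  qed (use assms in simp)
qed


lemma shearer:
  fixes V :: "'a set" and S :: "'i \<Rightarrow> 'a set"
  assumes "finite V" "finite I" "F \<subseteq> Pow V"
    and cnt: "\<forall>v\<in>V. card {i\<in>I. v \<in> S i} = r" and r: "r > 0"
  shows "real (card F) ^ r \<le> (\<Prod>i\<in>I. real (card ((\<lambda>A. A \<inter> S i) ` F)))"
  using assms(1,3,4)
proof (induction V arbitrary: F rule: finite_induct)
  case empty
  then have "F \<subseteq> {{}}" by auto
  then consider "F = {}" | "F = {{}}" by blast
  then show ?case
  proof cases
    case 1 then show ?thesis using r by (simp add: power_0_left)
  next
    case 2 then show ?thesis by simp
  qed
next
  case (insert v V)
  define P where "P i G = (\<lambda>A. A \<inter> S i) ` G" for i and G :: "'a set set"
  define F0 where "F0 = {A\<in>F. v \<notin> A}"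
  define F1' where "F1' = {A\<in>F. v \<in> A}"
  define F1 where "F1 = (\<lambda>A. A - {v}) ` F1'"
  have finF: "finite F" using insert.prems(1) insert.hyps(1)
    by (meson finite_Pow_iff finite_insert rev_finite_subset)
  have F0sub: "F0 \<subseteq> Pow V" using insert.prems(1) unfolding F0_def by auto
  have F1sub: "F1 \<subseteq> Pow V" using insert.prems(1) unfolding F1_def F1'_def by auto
  have cntV: "\<forall>u\<in>V. card {i\<in>I. u \<in> S i} = r" using insert.prems(2) by auto
  have IH0: "real (card F0) ^ r \<le> (\<Prod>i\<in>I. real (card (P i F0)))"
    using insert.IH[OF F0sub cntV] unfolding P_def .
  have IH1: "real (card F1) ^ r \<le> (\<Prod>i\<in>I. real (card (P i F1)))"
    using insert.IH[OF F1sub cntV] unfolding P_def .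
  have injF1: "inj_on (\<lambda>A. A - {v}) F1'" unfolding F1'_def inj_on_def by blast
  have cF: "card F = card F0 + card F1"
  proof -
    have "F = F0 \<union> F1'" "F0 \<inter> F1' = {}" unfolding F0_def F1'_def by auto
    then have "card F = card F0 + card F1'" using finF
      by (metis card_Un_disjoint finite_Un)
    then show ?thesis unfolding F1_def using card_image[OF injF1] by simp
  qed
  define J where "J = {i\<in>I. v \<in> S i}"
  have cJ: "card J = r" using insert.prems(2) unfolding J_def by simp
  have finJ: "finite J" "J \<noteq> {}" using assms(2) cJ r unfolding J_def by (auto simp: card_gt_0_iff)
  have JI: "J \<subseteq> I" unfolding J_def by auto
  have finP: "finite (P i G)" if "G \<subseteq> F" for i G
    unfolding P_def using finF that by (meson finite_imageI rev_finite_subset)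
  have F0F: "F0 \<subseteq> F" unfolding F0_def by auto
  have F1'F: "F1' \<subseteq> F" unfolding F1'_def by auto
  have out0: "P i F0 \<subseteq> P i F" for i using F0F unfolding P_def by auto
  have out1: "P i F1 \<subseteq> P i F" if "i \<in> I - J" for i
  proof
    fix B assume "B \<in> P i F1"
    then obtain A where A: "A \<in> F1'" "B = (A - {v}) \<inter> S i" unfolding P_def F1_def by auto
    have "v \<notin> S i" using that unfolding J_def by auto
    then have "B = A \<inter> S i" using A by auto
    then show "B \<in> P i F" using A F1'F unfolding P_def by auto
  qed
  have inn: "card (P i F) = card (P i F0) + card (P i F1)" if "i \<in> J" for i
  proof -
    have vi: "v \<in> S i" using that unfolding J_def by auto
    have "P i F = P i F0 \<union> P i F1'" unfolding P_def F0_def F1'_def by auto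
    moreover have "P i F0 \<inter> P i F1' = {}" unfolding P_def F0_def F1'_def using vi by auto
    moreover have "P i F1' = insert v ` P i F1"
    proof -
      have "insert v ` P i F1 = (\<lambda>A. insert v ((A - {v}) \<inter> S i)) ` F1'"
        unfolding P_def F1_def image_image ..
      also have "\<dots> = (\<lambda>A. A \<inter> S i) ` F1'"
        by (rule image_cong) (use vi in \<open>auto simp: F1'_def\<close>)
      finally show ?thesis unfolding P_def by simp
    qed
    moreover have "inj_on (insert v) (P i F1)"
      unfolding inj_on_def P_def F1_def by auto
    moreover have "finite (P i F0)" "finite (P i F1')" using finP F0F F1'F by auto
    ultimately show ?thesis by (simp add: card_Un_disjoint card_image)
  qed
  define C where "C = (\<Prod>i\<in>I-J. real (card (P i F)))"
  have Cnn: "C \<ge> 0" unfolding C_def by (simp add: prod_nonneg)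
  have split: "(\<Prod>i\<in>I. h i) = (\<Prod>i\<in>I-J. h i) * (\<Prod>i\<in>J. h i)" for h :: "'i \<Rightarrow> real"
    using prod.subset_diff[OF JI assms(2)] by simp
  have bnd: "real (card G) ^ r \<le> C * (\<Prod>i\<in>J. real (card (P i G)))"
    if G: "real (card G) ^ r \<le> (\<Prod>i\<in>I. real (card (P i G)))"
      and sub: "\<And>i. i \<in> I - J \<Longrightarrow> P i G \<subseteq> P i F" for G
  proof -
    have "(\<Prod>i\<in>I-J. real (card (P i G))) \<le> C"
      unfolding C_def
      by (intro prod_mono) (use sub finP[OF order_refl] in \<open>auto intro: card_mono\<close>)
    then have "(\<Prod>i\<in>I-J. real (card (P i G))) * (\<Prod>i\<in>J. real (card (P i G)))
        \<le> C * (\<Prod>i\<in>J. real (card (P i G)))"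
      by (intro mult_right_mono) (auto simp: prod_nonneg)
    then show ?thesis using G split[of "\<lambda>i. real (card (P i G))"] by simp
  qed
  have b0: "real (card F0) ^ r \<le> C * (\<Prod>i\<in>J. real (card (P i F0)))"
    using bnd[OF IH0] out0 by blast
  have b1: "real (card F1) ^ r \<le> C * (\<Prod>i\<in>J. real (card (P i F1)))"
    using bnd[OF IH1 out1] by blast
  let ?k = "1 / real r"
  have root: "real (card G) \<le> C powr ?k * (\<Prod>i\<in>J. real (card (P i G))) powr ?k"
    if "real (card G) ^ r \<le> C * (\<Prod>i\<in>J. real (card (P i G)))" for G
  proof -
    have "real (card G) = (real (card G) ^ r) powr ?k"
      using r by (intro pow_powr_inv(1)[symmetric]) auto
    also have "\<dots> \<le> (C * (\<Prod>i\<in>J. real (card (P i G)))) powr ?k"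
      by (rule powr_mono2) (use that in auto)
    also have "\<dots> = C powr ?k * (\<Prod>i\<in>J. real (card (P i G))) powr ?k"
      using Cnn by (simp add: powr_mult prod_nonneg)
    finally show ?thesis .
  qed
  have "real (card F) = real (card F0) + real (card F1)" using cF by simp
  also have "\<dots> \<le> C powr ?k * ((\<Prod>i\<in>J. real (card (P i F0))) powr ?k + (\<Prod>i\<in>J. real (card (P i F1))) powr ?k)"
    using root[OF b0] root[OF b1] by (simp add: distrib_left)
  also have "\<dots> \<le> C powr ?k * (\<Prod>i\<in>J. real (card (P i F0)) + real (card (P i F1))) powr ?k"
    using gm_super[OF finJ, of "\<lambda>i. real (card (P i F0))" "\<lambda>i. real (card (P i F1))"] cJ
    by (intro mult_left_mono) auto
  also have "\<dots> = C powr ?k * (\<Prod>i\<in>J. real (card (P i F))) powr ?k"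
    using inn by (subst prod.cong[OF refl, of J _ "\<lambda>i. real (card (P i F))"]) auto
  also have "\<dots> = (C * (\<Prod>i\<in>J. real (card (P i F)))) powr ?k"
    using Cnn by (simp add: powr_mult prod_nonneg)
  also have "\<dots> = (\<Prod>i\<in>I. real (card (P i F))) powr ?k"
    unfolding C_def using split[of "\<lambda>i. real (card (P i F))"] by simp
  finally have le: "real (card F) \<le> (\<Prod>i\<in>I. real (card (P i F))) powr ?k" .
  have "real (card F) ^ r \<le> ((\<Prod>i\<in>I. real (card (P i F))) powr ?k) ^ r"
    using le by (intro power_mono) auto
  also have "\<dots> = (\<Prod>i\<in>I. real (card (P i F)))"
    using r by (intro pow_powr_inv(2)) (auto simp: prod_nonneg)
  finally show ?case unfolding P_def .
qed


definition Fam :: "nat set \<Rightarrow> nat \<Rightarrow> nat set set set" where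
  "Fam E r = {B. matroid_bases E B \<and> (\<forall>X\<in>B. card X = r)}"
definition mc :: "nat set \<Rightarrow> nat \<Rightarrow> nat" where
  "mc E r = card (Fam E r)"

lemma matroid_count_mc: "matroid_count n r = mc {1..n} r"
  unfolding matroid_count_def mc_def Fam_def ..

lemma Fam_sub: "Fam E r \<subseteq> Pow {X. X \<subseteq> E \<and> card X = r}"
  unfolding Fam_def matroid_bases_def by auto
lemma finite_Fam: "finite E \<Longrightarrow> finite (Fam E r)"
  by (rule finite_subset[OF Fam_sub]) auto
lemma aug:
  assumes M: "matroid_bases E B" and fin: "finite E" and Z: "Z \<in> B" and X: "X \<in> B" and I: "I \<subseteq> Z"
  shows "\<exists>W\<in>B. I \<subseteq> W \<and> W \<subseteq> I \<union> X"
  using Z I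
proof (induction "card (Z - (I \<union> X))" arbitrary: Z rule: less_induct)
  case less
  have finZ: "finite Z" using less.prems(1) M fin unfolding matroid_bases_def by (meson finite_subset)
  show ?case
  proof (cases "Z - (I \<union> X) = {}")
    case True
    then show ?thesis using less.prems by blast
  next
    case False
    then obtain p where p: "p \<in> Z" "p \<notin> I" "p \<notin> X" by blast
    then obtain y where y: "y \<in> X - Z" "insert y (Z - {p}) \<in> B"
      using M less.prems(1) X unfolding matroid_bases_def by blast
    let ?Z' = "insert y (Z - {p})"
    have eq: "?Z' - (I \<union> X) = (Z - (I \<union> X)) - {p}" using y by auto
    have "card ((Z - (I \<union> X)) - {p}) < card (Z - (I \<union> X))"
      using p finZ by (intro card_Diff1_less) auto
    then have "card (?Z' - (I \<union> X)) < card (Z - (I \<union> X))" unfolding eq .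
    moreover have "I \<subseteq> ?Z'" using less.prems(2) p by auto
    ultimately show ?thesis using less.hyps y(2) by blast
  qed
qed

definition contr :: "nat \<Rightarrow> nat set set \<Rightarrow> nat set set" where
  "contr x B = (\<lambda>X. X - {x}) ` {X\<in>B. x \<in> X}"

lemma contr_Fam:
  assumes "B \<in> Fam E r" "contr x B \<noteq> {}"
  shows "contr x B \<in> Fam (E - {x}) (r - 1)"
proof -
  have M: "matroid_bases E B" and c: "\<forall>X\<in>B. card X = r" using assms(1) unfolding Fam_def by auto
  show ?thesis
    unfolding Fam_def mem_Collect_eq
  proof (intro conjI)
    show "\<forall>Xa\<in>contr x B. card Xa = r - 1" unfolding contr_def using c by auto
    show "matroid_bases (E - {x}) (contr x B)"
      unfolding matroid_bases_def
    proof (intro conjI ballI)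
      show "contr x B \<noteq> {}" by fact
    next
      fix X assume "X \<in> contr x B" then show "X \<subseteq> E - {x}"
        using M unfolding contr_def matroid_bases_def by auto
    next
      fix X Y z assume XY: "X \<in> contr x B" "Y \<in> contr x B" "z \<in> X - Y"
      then obtain X0 Y0 where X0: "X0 \<in> B" "x \<in> X0" "X = X0 - {x}" and Y0: "Y0 \<in> B" "x \<in> Y0" "Y = Y0 - {x}"
        unfolding contr_def by auto
      have "z \<in> X0 - Y0" "z \<noteq> x" using XY(3) X0 Y0 by auto
      then obtain y where y: "y \<in> Y0 - X0" "insert y (X0 - {z}) \<in> B"
        using M X0 Y0 unfolding matroid_bases_def by blast
      have "y \<noteq> x" using y X0 by auto
      have "insert y (X0 - {z}) - {x} = insert y (X - {z})" using X0 \<open>y \<noteq> x\<close> by auto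
      moreover have "x \<in> insert y (X0 - {z})" using X0 \<open>z \<noteq> x\<close> by auto
      ultimately have "insert y (X - {z}) \<in> contr x B" unfolding contr_def using y(2)
        by (metis (mono_tags, lifting) image_eqI mem_Collect_eq)
      moreover have "y \<in> Y - X" using y X0 Y0 \<open>y \<noteq> x\<close> by auto
      ultimately show "\<exists>y\<in>Y - X. insert y (X - {z}) \<in> contr x B" by blast
    qed
  qed
qed

lemma empty_notin_Fam: "{} \<notin> Fam E r"
  unfolding Fam_def matroid_bases_def by auto


lemma img_minus_inj:
  assumes "\<forall>X\<in>A1. x \<in> X" "\<forall>X\<in>A2. x \<in> X" "(\<lambda>X. X - {x}) ` A1 = (\<lambda>X. X - {x}) ` A2"
  shows "A1 = A2"
proof -
  have *: "A \<subseteq> A'" if "\<forall>X\<in>A. x \<in> X" "\<forall>X\<in>A'. x \<in> X" "(\<lambda>X. X - {x}) ` A = (\<lambda>X. X - {x}) ` A'" for A A'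
  proof
    fix X assume X: "X \<in> A"
    then have "X - {x} \<in> (\<lambda>X. X - {x}) ` A'" using that(3) by blast
    then obtain Y where Y: "Y \<in> A'" "X - {x} = Y - {x}" by blast
    have "X = insert x (X - {x})" using X that(1) by blast
    also have "\<dots> = insert x (Y - {x})" using Y by simp
    also have "\<dots> = Y" using Y that(2) by blast
    finally show "X \<in> A'" using Y by simp
  qed
  show ?thesis using *[OF assms] *[OF assms(2,1) assms(3)[symmetric]] by blast
qed


lemma shearer_step:
  assumes fin: "finite E" and r: "r > 0"
  shows "real (mc E r + 1) ^ r \<le> (\<Prod>x\<in>E. real (mc (E - {x}) (r - 1) + 1))"
proof -
  define V where "V = {X. X \<subseteq> E \<and> card X = r}"
  define F where "F = insert {} (Fam E r)"
  define S where "S x = {X. x \<in> (X::nat set)}" for x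
  have finV: "finite V" unfolding V_def using fin by auto
  have FV: "F \<subseteq> Pow V" unfolding F_def V_def using Fam_sub by auto
  have cnt: "\<forall>v\<in>V. card {i\<in>E. v \<in> S i} = r"
  proof
    fix v assume "v \<in> V"
    then have "{i\<in>E. v \<in> S i} = v" "card v = r" unfolding V_def S_def by auto
    then show "card {i\<in>E. v \<in> S i} = r" by simp
  qed
  have sh: "real (card F) ^ r \<le> (\<Prod>i\<in>E. real (card ((\<lambda>A. A \<inter> S i) ` F)))"
    by (rule shearer[OF finV fin FV cnt r])
  have cF: "card F = mc E r + 1" unfolding F_def mc_def
    using finite_Fam[OF fin] empty_notin_Fam by simp
  have proj: "card ((\<lambda>A. A \<inter> S x) ` F) \<le> mc (E - {x}) (r - 1) + 1" if x: "x \<in> E" for x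
  proof -
    let ?G = "insert {} (Fam (E - {x}) (r - 1))"
    have "inj_on (\<lambda>A. (\<lambda>X. X - {x}) ` A) ((\<lambda>A. A \<inter> S x) ` F)"
    proof (rule inj_onI)
      fix A1 A2 assume A: "A1 \<in> (\<lambda>A. A \<inter> S x) ` F" "A2 \<in> (\<lambda>A. A \<inter> S x) ` F"
        "(\<lambda>X. X - {x}) ` A1 = (\<lambda>X. X - {x}) ` A2"
      have "\<forall>X\<in>A1. x \<in> X" "\<forall>X\<in>A2. x \<in> X" using A(1,2) unfolding S_def by auto
      then show "A1 = A2" using A(3) by (rule img_minus_inj)
    qed
    moreover have "(\<lambda>A. (\<lambda>X. X - {x}) ` A) ` ((\<lambda>A. A \<inter> S x) ` F) \<subseteq> ?G"
    proof
      fix C assume "C \<in> (\<lambda>A. (\<lambda>X. X - {x}) ` A) ` ((\<lambda>A. A \<inter> S x) ` F)"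
      then obtain A where A: "A \<in> F" "C = (\<lambda>X. X - {x}) ` (A \<inter> S x)" by auto
      show "C \<in> ?G"
      proof (cases "A = {}")
        case False
        then have AF: "A \<in> Fam E r" using A F_def by auto
        have "C = contr x A" unfolding A(2) contr_def S_def by (rule arg_cong[where f="image _"]) auto
        then show ?thesis using contr_Fam[OF AF] by auto
      qed (use A in auto)
    qed
    moreover have "finite ?G" using finite_Fam fin by auto
    ultimately have "card ((\<lambda>A. A \<inter> S x) ` F) \<le> card ?G" by (rule card_inj_on_le)
    also have "\<dots> = mc (E - {x}) (r - 1) + 1" unfolding mc_def
      using finite_Fam fin empty_notin_Fam by simp
    finally show ?thesis .
  qed
  have "(\<Prod>i\<in>E. real (card ((\<lambda>A. A \<inter> S i) ` F))) \<le> (\<Prod>x\<in>E. real (mc (E - {x}) (r - 1) + 1))"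
  proof (rule prod_mono)
    fix i assume "i \<in> E"
    from proj[OF this] show "0 \<le> real (card ((\<lambda>A. A \<inter> S i) ` F)) \<and>
      real (card ((\<lambda>A. A \<inter> S i) ` F)) \<le> real (mc (E - {i}) (r - 1) + 1)"
      by (simp only: of_nat_le_iff of_nat_0_le_iff simp_thms)
  qed
  then show ?thesis using sh cF by simp
qed



definition Lset :: "nat set set \<Rightarrow> nat \<Rightarrow> nat \<Rightarrow> nat set" where
  "Lset T a b = {a, b} \<union> {c. b < c \<and> {a, b, c} \<in> T}"
definition gg :: "nat set \<Rightarrow> (nat \<Rightarrow> nat option) \<Rightarrow> nat \<Rightarrow> nat option" where
  "gg J h z = (if z \<in> J then h z else Some z)"
definition dec :: "nat set \<Rightarrow> nat set \<Rightarrow> (nat \<Rightarrow> nat option) \<Rightarrow> nat set set \<Rightarrow> nat set set" where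
  "dec E J h T = {X. X \<subseteq> E \<and> card X = 3 \<and> (\<forall>z\<in>X. gg J h z \<noteq> None) \<and> inj_on (gg J h) X \<and>
     \<not> (\<exists>a b c. a < b \<and> {a, b, c} \<in> T \<and> (\<forall>z\<in>X. the (gg J h z) \<in> Lset T a b))}"

lemma choose2_ge: "3 \<le> s \<Longrightarrow> 3 * (s - 2) \<le> s choose 2"
proof -
  assume s: "3 \<le> s"
  have "6 * (s - 2) \<le> s * (s - 1)"
  proof -
    obtain k where k: "s = k + 3" using s by (metis add.commute le_iff_add)
    have "6 * (k + 1) \<le> (k + 3) * (k + 2)" by (simp add: algebra_simps)
    then show ?thesis using k by (simp add: numeral_eq_Suc)
  qed
  then have "3 * (s - 2) \<le> s * (s - 1) div 2" by linarith
  then show ?thesis by (simp add: choose_two)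
qed

lemma pairs_count:
  fixes R :: "'a set" and LL :: "'a set set"
  assumes finR: "finite R" and sub: "LL \<subseteq> Pow R" and big: "\<forall>l\<in>LL. 3 \<le> card l"
    and inter: "\<forall>l\<in>LL. \<forall>l'\<in>LL. l \<noteq> l' \<longrightarrow> card (l \<inter> l') \<le> 1"
  shows "3 * (\<Sum>l\<in>LL. card l - 2) \<le> card R choose 2"
proof -
  define P where "P l = {p. p \<subseteq> l \<and> card p = 2}" for l :: "'a set"
  have finLL: "finite LL" using sub finR by (meson finite_Pow_iff rev_finite_subset)
  have finl: "finite l" if "l \<in> LL" for l using that sub finR by (meson PowD rev_finite_subset subsetD)
  have cP: "card (P l) = card l choose 2" if "l \<in> LL" for l
    unfolding P_def using n_subsets[OF finl[OF that]] .
  have finP: "finite (P l)" if "l \<in> LL" for l unfolding P_def using finl[OF that] by simp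
  have disj: "P l \<inter> P l' = {}" if "l \<in> LL" "l' \<in> LL" "l \<noteq> l'" for l l'
  proof (rule ccontr)
    assume "P l \<inter> P l' \<noteq> {}"
    then obtain p where p: "p \<subseteq> l \<inter> l'" "card p = 2" unfolding P_def by blast
    have "finite (l \<inter> l')" using finl that by blast
    then have "card p \<le> card (l \<inter> l')" using p(1) by (rule card_mono)
    then show False using inter that p(2) by fastforce
  qed
  have "(\<Sum>l\<in>LL. 3 * (card l - 2)) \<le> (\<Sum>l\<in>LL. card (P l))"
    by (rule sum_mono) (use cP choose2_ge big in auto)
  also have "\<dots> = card (\<Union>l\<in>LL. P l)"
    by (rule card_UN_disjoint[symmetric]) (use finLL finP disj in auto)
  also have "\<dots> \<le> card {p. p \<subseteq> R \<and> card p = 2}"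
    by (rule card_mono) (use finR sub in \<open>auto simp: P_def\<close>)
  also have "\<dots> = card R choose 2" by (rule n_subsets[OF finR])
  finally show ?thesis by (simp add: sum_distrib_left)
qed

locale m3 =
  fixes E :: "nat set" and B :: "nat set set"
  assumes fin: "finite E" and M: "matroid_bases E B" and c3: "\<forall>X\<in>B. card X = 3"
begin

definition nl where "nl x \<longleftrightarrow> (\<exists>X\<in>B. x \<in> X)"
definition ind where "ind x y \<longleftrightarrow> (\<exists>X\<in>B. x \<in> X \<and> y \<in> X)"
definition par where "par x y \<longleftrightarrow> x \<noteq> y \<and> nl x \<and> nl y \<and> \<not> ind x y"
definition R where "R = {x\<in>E. nl x \<and> (\<forall>y. par x y \<longrightarrow> x < y)}"
definition rep where "rep x = (LEAST y. y = x \<or> par x y)"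
definition line where "line a b = {z\<in>E. z = a \<or> z = b \<or> {a, b, z} \<notin> B}"

lemma B_sub: "X \<in> B \<Longrightarrow> X \<subseteq> E" using M unfolding matroid_bases_def by auto
lemma B_card: "X \<in> B \<Longrightarrow> card X = 3" using c3 by auto
lemma B_fin: "X \<in> B \<Longrightarrow> finite X" using B_sub fin finite_subset by blast
lemma B_ne: "B \<noteq> {}" using M unfolding matroid_bases_def by auto

lemma nl_E: "nl x \<Longrightarrow> x \<in> E" unfolding nl_def using B_sub by auto

lemma ind_nl: "ind x y \<Longrightarrow> nl x \<and> nl y" unfolding ind_def nl_def by auto

lemma augB: "Z \<in> B \<Longrightarrow> X \<in> B \<Longrightarrow> I \<subseteq> Z \<Longrightarrow> \<exists>W\<in>B. I \<subseteq> W \<and> W \<subseteq> I \<union> X"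
  using aug[OF M fin] by blast

lemma card3_eq:
  assumes "W \<in> B" "a \<in> W" "b \<in> W" "w \<in> W" "a \<noteq> b" "a \<noteq> w" "b \<noteq> w"
  shows "W = {a, b, w}"
proof -
  have sub: "{a, b, w} \<subseteq> W" using assms by auto
  have "card {a, b, w} = 3" using assms by auto
  then have "card {a, b, w} = card W" using B_card[OF assms(1)] by simp
  from card_subset_eq[OF B_fin[OF assms(1)] sub this] show ?thesis by simp
qed

lemma NB:
  assumes ab: "ind a b" "a \<noteq> b" and X: "X \<in> B" "X \<subseteq> line a b"
  shows False
proof -
  obtain Z where Z: "Z \<in> B" "a \<in> Z" "b \<in> Z" using ab unfolding ind_def by blast
  have "{a, b} \<subseteq> Z" using Z by blast
  then obtain W where W: "W \<in> B" "{a, b} \<subseteq> W" "W \<subseteq> {a, b} \<union> X"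
    using augB[OF Z(1) X(1), of "{a,b}"] by blast
  have "card W = 3" using B_card W(1) by blast
  moreover have "card {a, b} \<le> 2" by (simp add: card_insert_if)
  ultimately have "\<not> W \<subseteq> {a, b}" using card_mono[of "{a,b}" W] by fastforce
  then obtain w where w: "w \<in> W" "w \<noteq> a" "w \<noteq> b" by blast
  then have wX: "w \<in> X" using W(3) by blast
  have "a \<in> W" "b \<in> W" using W(2) by blast+
  from card3_eq[OF W(1) this w(1) ab(2)] w(2,3) have "W = {a, b, w}" by metis
  then have inB: "{a, b, w} \<in> B" using W(1) by simp
  have "w \<in> line a b" using X(2) wX by blast
  then have "{a, b, w} \<notin> B" using w(2,3) unfolding line_def by blast
  then show False using inB by contradiction
qed

lemma line_E: "line a b \<subseteq> E" unfolding line_def by auto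

lemma ind_E: "ind a b \<Longrightarrow> a \<in> E \<and> b \<in> E" using ind_nl nl_E by blast

lemma in_line_self: "ind a b \<Longrightarrow> a \<in> line a b \<and> b \<in> line a b"
  unfolding line_def using ind_E by auto

lemma triple_not_B:
  assumes "ind u v" "u \<noteq> v" "{a, b, c} \<subseteq> line u v"
  shows "{a, b, c} \<notin> B"
  using NB assms by blast

lemma line_uniq:
  assumes uv: "ind u v" "u \<noteq> v" and ab: "a \<in> line u v" "b \<in> line u v" "a \<noteq> b" "ind a b"
  shows "line a b = line u v"
proof -
  have fwd: "line x y \<subseteq> line a' b'" if xy: "ind x y" "x \<noteq> y" and ab': "a' \<in> line x y" "b' \<in> line x y" "a' \<noteq> b'" for x y a' b'
  proof
    fix z assume z: "z \<in> line x y"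
    show "z \<in> line a' b'"
    proof (cases "z = a' \<or> z = b'")
      case True then show ?thesis using z line_E unfolding line_def by auto
    next
      case False
      have "{a', b', z} \<notin> B" using triple_not_B[OF xy] ab' z by auto
      then show ?thesis using z line_E unfolding line_def by auto
    qed
  qed
  have 1: "line u v \<subseteq> line a b" using fwd[OF uv ab(1-3)] .
  have "u \<in> line a b" "v \<in> line a b" using 1 in_line_self[OF uv(1)] by auto
  then have 2: "line a b \<subseteq> line u v" using fwd[OF ab(4) ab(3)] uv(2) by blast
  show ?thesis using 1 2 by blast
qed

lemma sub1:
  assumes p: "par x y" and W: "x \<notin> W" "y \<notin> W" and XW: "insert x W \<in> B"
  shows "insert y W \<in> B"
proof -
  obtain Z where Z: "Z \<in> B" "y \<in> Z" using p unfolding par_def nl_def by auto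
  obtain W' where W': "W' \<in> B" "{y} \<subseteq> W'" "W' \<subseteq> {y} \<union> insert x W"
    using augB[OF Z(1) XW, of "{y}"] Z by auto
  have "x \<notin> W'" using W' p unfolding par_def ind_def by auto
  then have sub: "W' \<subseteq> insert y W" using W' by auto
  have fW: "finite W" using B_fin[OF XW] by simp
  have "card (insert x W) = 3" using B_card XW by blast
  then have "card W = 2" using W fW by simp
  then have "card (insert y W) = 3" using W fW by simp
  moreover have "card W' = 3" using B_card W' by blast
  ultimately have "W' = insert y W" using sub fW card_subset_eq[of "insert y W" W'] by simp
  then show ?thesis using W' by simp
qed

lemma par_sym: "par x y \<Longrightarrow> par y x" unfolding par_def ind_def by auto

lemma par_trans:
  assumes "par x y" "par y z" "x \<noteq> z"
  shows "par x z"
proof (rule ccontr)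
  assume "\<not> par x z"
  then have "ind x z" using assms unfolding par_def by auto
  then obtain X where X: "X \<in> B" "x \<in> X" "z \<in> X" unfolding ind_def by auto
  obtain Z where Z: "Z \<in> B" "y \<in> Z" using assms unfolding par_def nl_def by auto
  obtain W where W: "W \<in> B" "{y} \<subseteq> W" "W \<subseteq> {y} \<union> X"
    using augB[OF Z(1) X(1), of "{y}"] Z by auto
  have "x \<notin> W" "z \<notin> W" using W assms unfolding par_def ind_def by auto
  then have "W \<subseteq> insert y (X - {x, z})" using W by auto
  moreover have "card (X - {x, z}) = 1" using B_card[OF X(1)] B_fin[OF X(1)] X assms(3)
    by (simp add: card_Diff_subset)
  moreover have "finite X" using B_fin X by simp
  ultimately have "card W \<le> 2"
  proof -
    assume a: "W \<subseteq> insert y (X - {x, z})" "card (X - {x, z}) = 1" "finite X"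
    have "card W \<le> card (insert y (X - {x, z}))" using a by (intro card_mono) auto
    also have "\<dots> \<le> Suc (card (X - {x, z}))" using a by (simp add: card_insert_if)
    finally show ?thesis using a by simp
  qed
  then show False using B_card W by fastforce
qed


lemma B_ind: "X \<in> B \<Longrightarrow> x \<in> X \<Longrightarrow> y \<in> X \<Longrightarrow> ind x y" unfolding ind_def by blast
lemma B_nl: "X \<in> B \<Longrightarrow> x \<in> X \<Longrightarrow> nl x" unfolding nl_def by blast

definition C where "C x = {y. y = x \<or> par x y}"

lemma C_eq: "par x y \<Longrightarrow> C x = C y"
  unfolding C_def using par_sym par_trans by blast

lemma rep_C: "rep x \<in> C x"
  unfolding rep_def C_def using LeastI[of "\<lambda>y. y = x \<or> par x y" x] by simp

lemma rep_le: "y \<in> C x \<Longrightarrow> rep x \<le> y"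
  unfolding rep_def C_def by (rule Least_le) simp

lemma rep_cases: "rep x = x \<or> par x (rep x)" using rep_C unfolding C_def by simp

lemma rep_par_eq: assumes "par x y" shows "rep x = rep y"
proof -
  have "(\<lambda>y'. y' = x \<or> par x y') = (\<lambda>y'. y' = y \<or> par y y')"
    using C_eq[OF assms] unfolding C_def by (simp add: set_eq_iff fun_eq_iff)
  then show ?thesis unfolding rep_def by simp
qed

lemma nl_rep: "nl x \<Longrightarrow> nl (rep x)" using rep_cases unfolding par_def by metis

lemma rep_R: assumes "nl x" shows "rep x \<in> R"
proof -
  have nlr: "nl (rep x)" using nl_rep assms .
  have CC: "C (rep x) = C x" using rep_cases C_eq by metis
  have "rep x < y" if "par (rep x) y" for y
  proof -
    have "y \<in> C x" using that CC unfolding C_def by auto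
    then have "rep x \<le> y" by (rule rep_le)
    moreover have "rep x \<noteq> y" using that unfolding par_def by simp
    ultimately show ?thesis by simp
  qed
  then show ?thesis unfolding R_def using nlr nl_E by blast
qed

lemma R_rep: assumes "x \<in> R" shows "rep x = x"
proof -
  have "rep x \<in> C x" by (rule rep_C)
  then have "rep x = x \<or> par x (rep x)" unfolding C_def by simp
  moreover have "rep x \<le> x" by (rule rep_le) (simp add: C_def)
  moreover have "par x y \<Longrightarrow> x < y" for y using assms unfolding R_def by blast
  ultimately show ?thesis by fastforce
qed

lemma rep_eq_par: assumes "nl x" "nl y" "rep x = rep y" "x \<noteq> y" shows "par x y"
proof -
  consider "rep x = x" | "par x (rep x)" using rep_cases by blast
  then show ?thesis
  proof cases
    case 1
    then have "rep y = x" using assms by simp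
    then have "par y x" using rep_cases[of y] assms(4) by auto
    then show ?thesis using par_sym by blast
  next
    case 2
    consider "rep y = y" | "par y (rep y)" using rep_cases by blast
    then show ?thesis
    proof cases
      case 1 then show ?thesis using 2 assms by simp
    next
      case 3: 2
      have "par (rep x) y" using 3 assms(3) par_sym by simp
      then show ?thesis using par_trans[OF 2] assms(4) by blast
    qed
  qed
qed

lemma R_ind: assumes "a \<in> R" "b \<in> R" "a \<noteq> b" shows "ind a b"
proof (rule ccontr)
  assume "\<not> ind a b"
  then have "par a b" using assms unfolding par_def R_def by auto
  then have "a < b" "b < a" using assms par_sym unfolding R_def by blast+
  then show False by simp
qed

lemma R_E: "R \<subseteq> E" unfolding R_def by auto
lemma R_nl: "x \<in> R \<Longrightarrow> nl x" unfolding R_def by auto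

lemma line_rep:
  assumes ab: "ind a b" "a \<noteq> b" and z: "nl z"
  shows "z \<in> line a b \<longleftrightarrow> rep z \<in> line a b"
proof (cases "rep z = z")
  case True then show ?thesis by simp
next
  case False
  then have p: "par z (rep z)" using rep_cases by metis
  let ?w = "rep z"
  have zE: "z \<in> E" "?w \<in> E" using z nl_E nl_rep by auto
  have nind: "\<not> ind z ?w" using p unfolding par_def by simp
  have inL: "x \<in> line a b" if "x \<in> E" "x = a \<or> x = b \<or> {a, b, x} \<notin> B" for x
    using that unfolding line_def by blast
  have notB: "{a, b, x} \<notin> B" if "x \<in> {z, ?w}" "y \<in> {z, ?w}" "y \<in> {a, b}" "x \<noteq> y" for x y
  proof
    assume "{a, b, x} \<in> B"
    then have "ind x y" using that by (intro B_ind[of "{a,b,x}"]) auto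
    then show False using nind that ind_def by blast
  qed
  show ?thesis
  proof (cases "z \<in> {a, b} \<or> ?w \<in> {a, b}")
    case True
    then obtain y where y: "y \<in> {z, ?w}" "y \<in> {a, b}" by blast
    have zl: "z \<in> line a b" using zE notB[of z y] y False by (intro inL) auto
    have wl: "?w \<in> line a b" using zE notB[of ?w y] y False by (intro inL) auto
    show ?thesis using zl wl by simp
  next
    case nin: False
    have "{a, b, z} \<in> B \<longleftrightarrow> {a, b, ?w} \<in> B"
    proof
      assume "{a, b, z} \<in> B"
      then have "insert z {a, b} \<in> B" by (simp add: insert_commute)
      from sub1[OF p _ _ this] nin have "insert ?w {a, b} \<in> B" by blast
      then show "{a, b, ?w} \<in> B" by (simp add: insert_commute)
    next
      assume "{a, b, ?w} \<in> B"
      then have "insert ?w {a, b} \<in> B" by (simp add: insert_commute)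
      from sub1[OF par_sym[OF p] _ _ this] nin have "insert z {a, b} \<in> B" by blast
      then show "{a, b, z} \<in> B" by (simp add: insert_commute)
    qed
    then show ?thesis using nin zE unfolding line_def by auto
  qed
qed


definition first where "first a b \<longleftrightarrow> a \<in> R \<and> b \<in> R \<and> a < b \<and> (\<forall>d\<in>R. d < b \<and> d \<noteq> a \<longrightarrow> {a, b, d} \<in> B)"
definition T where "T = {t. \<exists>a b c. t = {a, b, c} \<and> first a b \<and> c \<in> R \<and> b < c \<and> {a, b, c} \<notin> B}"
definition J where "J = E - R"
definition h where "h = restrict (\<lambda>x. if nl x then Some (rep x) else None) J"

lemma gg_val: assumes "z \<in> E" shows "gg J h z = (if nl z then Some (rep z) else None)"
proof (cases "z \<in> R")
  case True then show ?thesis unfolding gg_def J_def using R_rep R_nl by simp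
next
  case False then show ?thesis unfolding gg_def J_def h_def using assms by simp
qed

lemma T_sub_R: "t \<in> T \<Longrightarrow> t \<subseteq> R" unfolding T_def first_def by auto
lemma T_notB: "t \<in> T \<Longrightarrow> t \<notin> B" unfolding T_def by auto

lemma Lset_line:
  assumes "a < b" "{a, b, c} \<in> T"
  shows "ind a b \<and> Lset T a b \<subseteq> line a b"
proof
  have ab: "a \<in> R" "b \<in> R" using T_sub_R[OF assms(2)] by auto
  then show iab: "ind a b" using R_ind assms(1) by simp
  show "Lset T a b \<subseteq> line a b"
  proof
    fix z assume "z \<in> Lset T a b"
    then consider "z = a" | "z = b" | "{a, b, z} \<in> T" unfolding Lset_def by blast
    then show "z \<in> line a b"
    proof cases
      case 3
      have "z \<in> E" using T_sub_R[OF 3] R_E by blast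
      then show ?thesis using T_notB[OF 3] unfolding line_def by blast
    qed (use in_line_self[OF iab] in auto)
  qed
qed

lemma two_smallest:
  assumes "first a b" "x \<in> R" "x \<in> line a b"
  shows "x = a \<or> x = b \<or> b < x"
proof (rule ccontr)
  assume "\<not> ?thesis"
  then have "x < b" "x \<noteq> a" "x \<noteq> b" by auto
  then have "{a, b, x} \<in> B" using assms unfolding first_def by blast
  moreover have "{a, b, x} \<notin> B" using assms(3) \<open>x \<noteq> a\<close> \<open>x \<noteq> b\<close> unfolding line_def by blast
  ultimately show False by contradiction
qed


lemma gg_X: assumes "X \<subseteq> E" "z \<in> X" shows "gg J h z \<noteq> None \<longleftrightarrow> nl z"
proof -
  have "z \<in> E" using assms by blast
  then show ?thesis using gg_val[of z] by simp
qed

lemma decode: "dec E J h T = B"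
proof (intro set_eqI iffI)
  fix X assume X: "X \<in> dec E J h T"
  have XE: "X \<subseteq> E" and cX: "card X = 3" and nn: "\<forall>z\<in>X. gg J h z \<noteq> None"
    and inj: "inj_on (gg J h) X"
    and nex: "\<not> (\<exists>a b c. a < b \<and> {a, b, c} \<in> T \<and> (\<forall>z\<in>X. the (gg J h z) \<in> Lset T a b))"
    using X unfolding dec_def by auto
  have nlX: "nl z" if "z \<in> X" for z using gg_X[OF XE that] nn that by blast
  have ggX: "gg J h z = Some (rep z)" if "z \<in> X" for z using gg_val nlX that XE by auto
  have rinj: "inj_on rep X"
  proof (rule inj_onI)
    fix x y assume "x \<in> X" "y \<in> X" "rep x = rep y"
    then have "gg J h x = gg J h y" using ggX by simp
    then show "x = y" using inj \<open>x \<in> X\<close> \<open>y \<in> X\<close> by (simp add: inj_on_def)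
  qed
  have indX: "ind x y" if "x \<in> X" "y \<in> X" "x \<noteq> y" for x y
  proof (rule ccontr)
    assume "\<not> ind x y"
    then have "par x y" using nlX that unfolding par_def by blast
    then have "rep x = rep y" by (rule rep_par_eq)
    then show False using rinj that by (simp add: inj_on_def)
  qed
  show "X \<in> B"
  proof (rule ccontr)
    assume nB: "X \<notin> B"
    obtain x1 x2 x3 where X3: "X = {x1, x2, x3}" "x1 \<noteq> x2" "x2 \<noteq> x3" "x1 \<noteq> x3"
      using cX card_3_iff by metis
    have i12: "ind x1 x2" using indX X3 by simp
    have XL: "X \<subseteq> line x1 x2"
    proof
      fix z assume "z \<in> X"
      then consider "z = x1" | "z = x2" | "z = x3" using X3 by blast
      then show "z \<in> line x1 x2"
      proof cases
        case 3
        have "x3 \<in> E" using XE X3 by blast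
        then show ?thesis using 3 nB X3(1) unfolding line_def by blast
      qed (use in_line_self[OF i12] in auto)
    qed
    define L where "L = R \<inter> line x1 x2"
    have finL: "finite L" unfolding L_def using fin R_E finite_subset by blast
    have repL: "rep ` X \<subseteq> L"
    proof
      fix w assume "w \<in> rep ` X"
      then obtain z where z: "z \<in> X" "w = rep z" by blast
      have "rep z \<in> R" using rep_R nlX z(1) by blast
      moreover have "rep z \<in> line x1 x2" using line_rep[OF i12 X3(2) nlX[OF z(1)]] XL z(1) by blast
      ultimately show "w \<in> L" using z unfolding L_def by blast
    qed
    have "card (rep ` X) = 3" using card_image[OF rinj] cX by simp
    then have cL: "card L \<ge> 3" using card_mono[OF finL repL] by simp
    then have Lne: "L \<noteq> {}" by auto
    define a where "a = Min L"
    have aL: "a \<in> L" unfolding a_def using Min_in[OF finL Lne] .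
    have L1ne: "L - {a} \<noteq> {}"
    proof
      assume "L - {a} = {}"
      then have "L \<subseteq> {a}" by blast
      then have "card L \<le> 1" using card_mono[of "{a}" L] by simp
      then show False using cL by simp
    qed
    define b where "b = Min (L - {a})"
    have finL1: "finite (L - {a})" using finL by simp
    have bL: "b \<in> L - {a}" unfolding b_def using Min_in[OF finL1 L1ne] .
    have ab: "a < b"
    proof -
      have "a \<le> b" unfolding a_def using Min_le[OF finL] bL by blast
      then show ?thesis using bL by auto
    qed
    have aR: "a \<in> R" and bR: "b \<in> R" using aL bL unfolding L_def by auto
    have iab: "ind a b" using R_ind aR bR ab by simp
    have lab: "line a b = line x1 x2"
      using line_uniq[OF i12 X3(2)] aL bL iab ab unfolding L_def by auto
    have fab: "first a b"
    proof -
      have "\<forall>d\<in>R. d < b \<and> d \<noteq> a \<longrightarrow> {a, b, d} \<in> B"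
      proof (intro ballI impI)
        fix d assume d: "d \<in> R" "d < b \<and> d \<noteq> a"
        show "{a, b, d} \<in> B"
        proof (rule ccontr)
          assume nd: "{a, b, d} \<notin> B"
          have "d \<in> E" using d R_E by blast
          then have "d \<in> line a b" unfolding line_def using nd by simp
          then have "d \<in> L - {a}" using d lab unfolding L_def by blast
          then have "b \<le> d" unfolding b_def by (rule Min_le[OF finL1])
          then show False using d by simp
        qed
      qed
      then show ?thesis unfolding first_def using aR bR ab by blast
    qed
    have cT: "{a, b, c} \<in> T \<and> b < c" if c: "c \<in> L - {a, b}" for c
    proof -
      have "c \<in> L - {a}" using c by blast
      then have "b \<le> c" unfolding b_def by (rule Min_le[OF finL1])
      then have bc: "b < c" using c by auto
      have "{a, b, c} \<subseteq> line x1 x2" using aL bL c unfolding L_def by blast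
      then have nB3: "{a, b, c} \<notin> B" by (rule triple_not_B[OF i12 X3(2)])
      have cR: "c \<in> R" using c unfolding L_def by blast
      have "\<exists>a' b' c'. {a, b, c} = {a', b', c'} \<and> first a' b' \<and> c' \<in> R \<and> b' < c' \<and> {a', b', c'} \<notin> B"
        by (intro exI[of _ a] exI[of _ b] exI[of _ c] conjI refl fab cR bc nB3)
      then have "{a, b, c} \<in> T" unfolding T_def by (rule CollectI)
      then show ?thesis using bc by simp
    qed
    have "L - {a, b} \<noteq> {}"
    proof
      assume "L - {a, b} = {}"
      then have "L \<subseteq> {a, b}" by blast
      then have "card L \<le> card {a, b}" using card_mono[of "{a,b}" L] by simp
      also have "\<dots> \<le> 2" by (simp add: card_insert_if)
      finally show False using cL by simp
    qed
    then obtain c where c: "c \<in> L - {a, b}" by blast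
    have "\<forall>z\<in>X. the (gg J h z) \<in> Lset T a b"
    proof
      fix z assume z: "z \<in> X"
      have rz: "rep z \<in> L" using repL z by blast
      have "rep z \<in> Lset T a b"
      proof (cases "rep z \<in> {a, b}")
        case True then show ?thesis unfolding Lset_def by blast
      next
        case False
        then have "rep z \<in> L - {a, b}" using rz by blast
        from cT[OF this] show ?thesis unfolding Lset_def by blast
      qed
      then show "the (gg J h z) \<in> Lset T a b" using ggX z by simp
    qed
    then have "\<exists>a' b' c'. a' < b' \<and> {a', b', c'} \<in> T \<and> (\<forall>z\<in>X. the (gg J h z) \<in> Lset T a' b')"
      using ab cT[OF c] by (intro exI[of _ a] exI[of _ b] exI[of _ c]) simp
    then show False using nex by (rule notE[rotated])
  qed
next
  fix X assume X: "X \<in> B"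
  have XE: "X \<subseteq> E" using B_sub X .
  have nlX: "nl z" if "z \<in> X" for z using B_nl X that .
  have ggX: "gg J h z = Some (rep z)" if "z \<in> X" for z using gg_val nlX that XE by auto
  have inj: "inj_on (gg J h) X"
  proof (rule inj_onI)
    fix x y assume xy: "x \<in> X" "y \<in> X" "gg J h x = gg J h y"
    show "x = y"
    proof (rule ccontr)
      assume "x \<noteq> y"
      have "rep x = rep y" using xy ggX by simp
      then have "par x y" using rep_eq_par nlX xy \<open>x \<noteq> y\<close> by blast
      then show False using B_ind[OF X xy(1,2)] unfolding par_def by blast
    qed
  qed
  have nex: "\<not> (\<exists>a b c. a < b \<and> {a, b, c} \<in> T \<and> (\<forall>z\<in>X. the (gg J h z) \<in> Lset T a b))"
  proof
    assume "\<exists>a b c. a < b \<and> {a, b, c} \<in> T \<and> (\<forall>z\<in>X. the (gg J h z) \<in> Lset T a b)"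
    then obtain a b c where abc: "a < b" "{a, b, c} \<in> T" "\<forall>z\<in>X. the (gg J h z) \<in> Lset T a b" by blast
    have iab: "ind a b" and Ls: "Lset T a b \<subseteq> line a b" using Lset_line[OF abc(1,2)] by auto
    have "X \<subseteq> line a b"
    proof
      fix z assume z: "z \<in> X"
      have "rep z \<in> line a b" using abc(3) z ggX Ls by auto
      then show "z \<in> line a b" using line_rep[OF iab _ nlX[OF z]] abc(1) by simp
    qed
    then show False using NB[OF iab _ X] abc(1) by simp
  qed
  show "X \<in> dec E J h T"
    unfolding dec_def using XE B_card[OF X] nlX ggX inj nex by auto
qed


lemma T_elem: "t \<in> T \<Longrightarrow> \<exists>a b c. t = {a, b, c} \<and> first a b \<and> c \<in> R \<and> b < c \<and> {a, b, c} \<notin> B"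
  unfolding T_def by blast

lemma first_R: "first a b \<Longrightarrow> a \<in> R \<and> b \<in> R \<and> a < b" unfolding first_def by blast

definition LL where "LL = {l. \<exists>u v. u \<in> R \<and> v \<in> R \<and> u \<noteq> v \<and> l = R \<inter> line u v \<and> 3 \<le> card l}"

lemma finR: "finite R" using fin R_E finite_subset by blast

lemma LL_inter:
  assumes "l \<in> LL" "l' \<in> LL" "l \<noteq> l'" shows "card (l \<inter> l') \<le> 1"
proof (rule ccontr)
  assume "\<not> card (l \<inter> l') \<le> 1"
  moreover have "finite (l \<inter> l')" using finR assms(1) unfolding LL_def by auto
  ultimately obtain x y where xy: "x \<in> l \<inter> l'" "y \<in> l \<inter> l'" "x \<noteq> y"
    using card_le_Suc0_iff_eq by (metis One_nat_def)
  obtain u v where uv: "u \<in> R" "v \<in> R" "u \<noteq> v" "l = R \<inter> line u v" using assms(1) unfolding LL_def by blast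
  obtain u' v' where uv': "u' \<in> R" "v' \<in> R" "u' \<noteq> v'" "l' = R \<inter> line u' v'" using assms(2) unfolding LL_def by blast
  have ixy: "ind x y" using xy uv(4) R_ind by blast
  have "line x y = line u v" using line_uniq[OF R_ind[OF uv(1-3)] uv(3)] xy uv(4) ixy by blast
  moreover have "line x y = line u' v'" using line_uniq[OF R_ind[OF uv'(1-3)] uv'(3)] xy uv'(4) ixy by blast
  ultimately show False using assms(3) uv(4) uv'(4) by simp
qed

lemma T_in_LL: assumes "t \<in> T" shows "\<exists>l\<in>LL. t \<subseteq> l"
proof -
  obtain a b c where abc: "t = {a, b, c}" "first a b" "c \<in> R" "b < c" "{a, b, c} \<notin> B"
    using T_elem[OF assms] by blast
  have R2: "a \<in> R" "b \<in> R" "a < b" using first_R[OF abc(2)] by auto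
  have iab: "ind a b" using R_ind R2 by simp
  have "c \<in> line a b" using abc(3,5) R_E unfolding line_def by blast
  then have sub: "{a, b, c} \<subseteq> R \<inter> line a b" using in_line_self[OF iab] R2 abc(3) by blast
  have "card {a, b, c} = 3" using R2 abc(4) by simp
  moreover have "finite (R \<inter> line a b)" using finR by simp
  ultimately have "3 \<le> card (R \<inter> line a b)" using card_mono[OF _ sub] by simp
  then have "R \<inter> line a b \<in> LL" unfolding LL_def using R2 by blast
  then show ?thesis using sub abc(1) by blast
qed

lemma LL_count: assumes "l \<in> LL" shows "card {t\<in>T. t \<subseteq> l} \<le> card l - 2"
proof (cases "{t\<in>T. t \<subseteq> l} = {}")
  case True then show ?thesis by (subst True) simp
next
  case False
  then obtain t0 where t0: "t0 \<in> T" "t0 \<subseteq> l" by blast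
  obtain a b c where abc: "t0 = {a, b, c}" "first a b" "c \<in> R" "b < c" "{a, b, c} \<notin> B"
    using T_elem[OF t0(1)] by blast
  obtain u v where uv: "u \<in> R" "v \<in> R" "u \<noteq> v" "l = R \<inter> line u v" using assms unfolding LL_def by blast
  have finl: "finite l" using finR uv(4) by simp
  have iuv: "ind u v" using R_ind uv by simp
  have lsub: "l \<subseteq> line u v" using uv(4) by blast
  have R2: "a \<in> R" "b \<in> R" "a < b" using first_R[OF abc(2)] by auto
  have abl: "a \<in> l" "b \<in> l" using t0(2) abc(1) by blast+
  have iab: "ind a b" using R_ind R2 by simp
  have lab: "line a b = line u v"
    using line_uniq[OF iuv uv(3) subsetD[OF lsub abl(1)] subsetD[OF lsub abl(2)] _ iab] R2(3) by simp
  have key: "\<exists>c'. c' \<in> l - {a, b} \<and> t = {a, b, c'}" if t: "t \<in> T" "t \<subseteq> l" for t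
  proof -
    obtain a' b' c' where abc': "t = {a', b', c'}" "first a' b'" "c' \<in> R" "b' < c'" "{a', b', c'} \<notin> B"
      using T_elem[OF t(1)] by blast
    have R2': "a' \<in> R" "b' \<in> R" "a' < b'" using first_R[OF abc'(2)] by auto
    have abl': "a' \<in> l" "b' \<in> l" "c' \<in> l" using t(2) abc'(1) by blast+
    have iab': "ind a' b'" using R_ind R2' by simp
    have lab': "line a' b' = line u v"
      using line_uniq[OF iuv uv(3) subsetD[OF lsub abl'(1)] subsetD[OF lsub abl'(2)] _ iab'] R2'(3) by simp
    have "a' \<in> line a b" "b' \<in> line a b" using abl' lsub lab by blast+
    then have h1: "a' = a \<or> a' = b \<or> b < a'" "b' = a \<or> b' = b \<or> b < b'"
      using two_smallest[OF abc(2)] R2'(1,2) by blast+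
    have "a \<in> line a' b'" "b \<in> line a' b'" using abl lsub lab' by blast+
    then have h2: "a = a' \<or> a = b' \<or> b' < a" "b = a' \<or> b = b' \<or> b' < b"
      using two_smallest[OF abc'(2)] R2(1,2) by blast+
    have e: "a' = a" "b' = b" using h1 h2 R2(3) R2'(3) by linarith+
    have "c' \<noteq> a" "c' \<noteq> b" using e R2'(3) abc'(4) by simp_all
    then have "c' \<in> l - {a, b}" using abl'(3) by blast
    then show ?thesis using abc'(1) e by blast
  qed
  have inj: "inj_on (\<lambda>t. t - {a, b}) {t\<in>T. t \<subseteq> l}"
  proof (rule inj_onI)
    fix t1 t2 assume t12: "t1 \<in> {t\<in>T. t \<subseteq> l}" "t2 \<in> {t\<in>T. t \<subseteq> l}" "t1 - {a, b} = t2 - {a, b}"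
    obtain c1 where c1: "c1 \<in> l - {a, b}" "t1 = {a, b, c1}" using key t12(1) by blast
    obtain c2 where c2: "c2 \<in> l - {a, b}" "t2 = {a, b, c2}" using key t12(2) by blast
    have "t1 - {a, b} = {c1}" "t2 - {a, b} = {c2}" using c1 c2 by auto
    then have "c1 = c2" using t12(3) by simp
    then show "t1 = t2" using c1 c2 by simp
  qed
  have img: "(\<lambda>t. t - {a, b}) ` {t\<in>T. t \<subseteq> l} \<subseteq> (\<lambda>c. {c}) ` (l - {a, b})"
  proof
    fix s assume "s \<in> (\<lambda>t. t - {a, b}) ` {t\<in>T. t \<subseteq> l}"
    then obtain t where t: "t \<in> T" "t \<subseteq> l" "s = t - {a, b}" by blast
    obtain c' where c': "c' \<in> l - {a, b}" "t = {a, b, c'}" using key[OF t(1,2)] by blast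
    have "s = {c'}" using t(3) c' by auto
    then show "s \<in> (\<lambda>c. {c}) ` (l - {a, b})" using c'(1) by blast
  qed
  have "card {t\<in>T. t \<subseteq> l} \<le> card ((\<lambda>c. {c}) ` (l - {a, b}))"
    by (rule card_inj_on_le[OF inj img]) (simp add: finl)
  also have "\<dots> \<le> card (l - {a, b})" by (rule card_image_le) (simp add: finl)
  also have "\<dots> = card l - 2"
  proof -
    have "{a, b} \<subseteq> l" using abl by blast
    then show ?thesis using R2(3) finl by (simp add: card_Diff_subset)
  qed
  finally show ?thesis .
qed

lemma T_bound: "3 * card T \<le> card R choose 2"
proof -
  have LLP: "LL \<subseteq> Pow R" unfolding LL_def by blast
  have finLL: "finite LL" using finite_subset[OF LLP] finR by simp
  have finT: "finite T" using finite_subset[of T "Pow R"] T_sub_R finR by blast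
  have "T \<subseteq> (\<Union>l\<in>LL. {t\<in>T. t \<subseteq> l})" using T_in_LL by blast
  moreover have "finite (\<Union>l\<in>LL. {t\<in>T. t \<subseteq> l})" using finT by (rule finite_subset[rotated]) blast
  ultimately have "card T \<le> card (\<Union>l\<in>LL. {t\<in>T. t \<subseteq> l})" by (rule card_mono[rotated])
  also have "\<dots> \<le> (\<Sum>l\<in>LL. card {t\<in>T. t \<subseteq> l})" by (rule card_UN_le[OF finLL])
  also have "\<dots> \<le> (\<Sum>l\<in>LL. card l - 2)" by (rule sum_mono) (rule LL_count)
  finally have "3 * card T \<le> 3 * (\<Sum>l\<in>LL. card l - 2)" by simp
  also have "\<dots> \<le> card R choose 2"
  proof (rule pairs_count[OF finR LLP])
    show "\<forall>l\<in>LL. 3 \<le> card l" unfolding LL_def by blast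
    show "\<forall>l\<in>LL. \<forall>l'\<in>LL. l \<noteq> l' \<longrightarrow> card (l \<inter> l') \<le> 1" using LL_inter by blast
  qed
  finally show ?thesis .
qed

lemma R_card: "3 \<le> card R"
proof -
  obtain X where X: "X \<in> B" using B_ne by blast
  have "inj_on rep X"
  proof (rule inj_onI)
    fix x y assume xy: "x \<in> X" "y \<in> X" "rep x = rep y"
    show "x = y"
    proof (rule ccontr)
      assume "x \<noteq> y"
      then have "par x y" using rep_eq_par B_nl[OF X] xy by blast
      then show False using B_ind[OF X xy(1,2)] unfolding par_def by blast
    qed
  qed
  then have "card (rep ` X) = 3" using card_image[of rep X] B_card[OF X] by simp
  moreover have "rep ` X \<subseteq> R" using rep_R B_nl[OF X] by blast
  ultimately show ?thesis using card_mono[OF finR] by metis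
qed

lemma h_PiE: "h \<in> J \<rightarrow>\<^sub>E insert None (Some ` E)"
  unfolding h_def J_def using rep_R R_E by (auto simp: restrict_PiE_iff image_iff) blast

lemma T_V3: "T \<subseteq> {X. X \<subseteq> E \<and> card X = 3}"
proof
  fix t assume t: "t \<in> T"
  obtain a b c where abc: "t = {a, b, c}" "first a b" "c \<in> R" "b < c" "{a, b, c} \<notin> B"
    using T_elem[OF t] by blast
  have "a < b" using first_R[OF abc(2)] by simp
  then have "card t = 3" using abc by simp
  then show "t \<in> {X. X \<subseteq> E \<and> card X = 3}" using T_sub_R[OF t] R_E by blast
qed

lemma card_J: "card J = card E - card R"
  unfolding J_def using R_E fin by (simp add: card_Diff_subset finite_subset)

end

definition V3 :: "nat set \<Rightarrow> nat set set" where "V3 E = {X. X \<subseteq> E \<and> card X = 3}"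

definition Space :: "nat set \<Rightarrow> (nat set \<times> (nat \<Rightarrow> nat option) \<times> nat set set) set" where
  "Space E = Sigma {J. J \<subseteq> E \<and> card J + 3 \<le> card E}
     (\<lambda>J. (J \<rightarrow>\<^sub>E insert None (Some ` E)) \<times> {T. T \<subseteq> V3 E \<and> 3 * card T \<le> (card E - card J) choose 2})"

definition enc :: "nat set \<Rightarrow> nat set set \<Rightarrow> nat set \<times> (nat \<Rightarrow> nat option) \<times> nat set set" where
  "enc E B = (m3.J E B, m3.h E B, m3.T E B)"

lemma finite_Space: "finite E \<Longrightarrow> finite (Space E)"
  unfolding Space_def V3_def
  by (intro finite_SigmaI finite_cartesian_product finite_PiE) (auto intro: finite_subset)

lemma mc3_le: assumes fin: "finite E" shows "mc E 3 \<le> card (Space E)"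
proof -
  have loc: "m3 E B" if "B \<in> Fam E 3" for B
    using that fin unfolding Fam_def m3_def by auto
  have "inj_on (enc E) (Fam E 3)"
  proof (rule inj_onI)
    fix B1 B2 assume B: "B1 \<in> Fam E 3" "B2 \<in> Fam E 3" "enc E B1 = enc E B2"
    have "B1 = dec E (m3.J E B1) (m3.h E B1) (m3.T E B1)" using m3.decode[OF loc[OF B(1)]] by simp
    also have "\<dots> = dec E (m3.J E B2) (m3.h E B2) (m3.T E B2)" using B(3) unfolding enc_def by simp
    also have "\<dots> = B2" using m3.decode[OF loc[OF B(2)]] by simp
    finally show "B1 = B2" .
  qed
  moreover have "enc E ` Fam E 3 \<subseteq> Space E"
  proof
    fix y assume "y \<in> enc E ` Fam E 3"
    then obtain B where B: "B \<in> Fam E 3" "y = enc E B" by blast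
    interpret m: m3 E B by (rule loc[OF B(1)])
    have J: "m.J \<subseteq> E" "card m.J + 3 \<le> card E" using m.card_J m.R_card m.R_E card_mono[OF fin m.R_E]
      unfolding m.J_def by auto
    have T: "m.T \<subseteq> V3 E" using m.T_V3 unfolding V3_def .
    have "3 * card m.T \<le> (card E - card m.J) choose 2"
      using m.T_bound m.card_J card_mono[OF fin m.R_E] by simp
    then show "y \<in> Space E" unfolding B(2) enc_def Space_def using J T m.h_PiE by auto
  qed
  ultimately have "card (Fam E 3) \<le> card (Space E)" using finite_Space[OF fin] by (rule card_inj_on_le)
  then show ?thesis unfolding mc_def .
qed



lemma ln_cubic:
  fixes x :: real assumes x: "0 \<le> x"
  shows "ln (1 + x) \<le> x - x^2/2 + x^3/3"
proof -
  define g where "g t = t - t^2/2 + t^3/3 - ln (1 + t)" for t :: real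
  define g' where "g' t = 1 - t + t^2 - 1 / (1 + t)" for t :: real
  have d: "(g has_real_derivative g' t) (at t)" if "t \<in> {0..x}" for t
  proof -
    have "1 + t > 0" using that by auto
    then show ?thesis unfolding g_def g'_def
      by (auto intro!: derivative_eq_intros simp: power2_eq_square field_simps)
  qed
  have nn: "g' t \<ge> 0" if "t \<in> {0..x}" for t
  proof -
    have t: "t \<ge> 0" using that by auto
    have "g' t = t^3 / (1 + t)" unfolding g'_def using t
      by (simp add: field_simps power2_eq_square power3_eq_cube)
    then show ?thesis using t by simp
  qed
  have "g 0 \<le> g x" by (rule deriv_nonneg_imp_mono[OF d nn x])
  then show ?thesis unfolding g_def by simp
qed

lemma subsets_bound:
  fixes x :: real
  assumes A: "finite A" and x: "0 < x" "x \<le> 1"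
  shows "real (card {T. T \<subseteq> A \<and> card T \<le> t}) * x ^ t \<le> (1 + x) ^ card A"
proof -
  have "(1 + x) ^ card A = (\<Prod>a\<in>A. x + 1)" by (simp add: add.commute)
  also have "\<dots> = (\<Sum>S\<in>Pow A. (\<Prod>a\<in>S. x) * (\<Prod>a\<in>A - S. 1))" by (rule prod_add[OF A])
  also have "\<dots> = (\<Sum>S\<in>Pow A. x ^ card S)" by simp
  finally have eq: "(1 + x) ^ card A = (\<Sum>S\<in>Pow A. x ^ card S)" .
  have "real (card {T. T \<subseteq> A \<and> card T \<le> t}) * x ^ t = (\<Sum>S\<in>{T. T \<subseteq> A \<and> card T \<le> t}. x ^ t)"
    by simp
  also have "\<dots> \<le> (\<Sum>S\<in>{T. T \<subseteq> A \<and> card T \<le> t}. x ^ card S)"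
    by (rule sum_mono) (use x in \<open>auto intro: power_decreasing\<close>)
  also have "\<dots> \<le> (\<Sum>S\<in>Pow A. x ^ card S)"
    by (rule sum_mono2) (use A x in auto)
  finally show ?thesis using eq by simp
qed

lemma thirteen: "(13::real) powr (5/6) \<ge> 8"
proof -
  have "((13::real) powr (5/6)) ^ 6 = 13 powr ((5/6) * 6)"
    by (subst powr_realpow[symmetric]) (simp_all add: powr_powr)
  also have "\<dots> = 13 ^ 5" by (simp add: powr_realpow[symmetric])
  finally have "((13::real) powr (5/6)) ^ 6 = 13 ^ 5" .
  then have "(8::real) ^ 6 \<le> ((13::real) powr (5/6)) ^ 6" by simp
  then have "(8::real) ^ Suc 5 \<le> ((13::real) powr (5/6)) ^ Suc 5" by (simp add: numeral_eq_Suc)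
  then show ?thesis by (rule power_le_imp_le_base) simp
qed

lemma nq_bound:
  fixes n :: nat assumes n: "n \<ge> 15"
  shows "real n * (real n + 1) * (real n - 2) powr (- (real n + 2) / 6) \<le> 1/4"
proof -
  define y where "y = real n"
  have y: "y \<ge> 15" using n unfolding y_def by simp
  define a where "a = y - 2"
  have a: "a \<ge> 13" using y unfolding a_def by simp
  have "a powr ((y + 2) / 6) \<ge> a powr (17/6)"
    by (rule powr_mono) (use y a in auto)
  moreover have "a powr (17/6) = a^2 * a powr (5/6)"
  proof -
    have "a powr (17/6) = a powr (2 + 5/6)" by simp
    also have "\<dots> = a powr 2 * a powr (5/6)" by (rule powr_add)
    also have "a powr 2 = a^2" using a by (intro powr_numeral) simp
    finally show ?thesis .
  qed
  moreover have "a powr (5/6) \<ge> 8"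
  proof -
    have "a powr (5/6) \<ge> 13 powr (5/6)" by (rule powr_mono2) (use a in auto)
    then show ?thesis using thirteen by simp
  qed
  ultimately have P: "a powr ((y + 2) / 6) \<ge> 8 * a^2"
  proof -
    assume h: "a powr ((y + 2) / 6) \<ge> a powr (17/6)" "a powr (17/6) = a^2 * a powr (5/6)" "a powr (5/6) \<ge> 8"
    have "a^2 * 8 \<le> a^2 * a powr (5/6)" using h(3) by (intro mult_left_mono) auto
    then show ?thesis using h(1,2) by simp
  qed
  have Q: "y * (y + 1) \<le> 2 * a^2"
  proof -
    have "(y - 1) * (y - 8) \<ge> 0" using y by (intro mult_nonneg_nonneg) auto
    then show ?thesis unfolding a_def by (simp add: power2_eq_square algebra_simps)
  qed
  have apos: "a powr ((y + 2) / 6) > 0" using a by simp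
  have e: "- (y + 2) / 6 = - ((y + 2) / 6)" by linarith
  have "a powr (- (y + 2) / 6) = 1 / a powr ((y + 2) / 6)"
    by (subst e) (rule powr_minus_divide)
  then have "y * (y + 1) * a powr (- (y + 2) / 6) = y * (y + 1) / a powr ((y + 2) / 6)"
    by simp
  also have "\<dots> \<le> 2 * a^2 / (8 * a^2)"
    by (rule frac_le) (use Q P a y in auto)
  also have "\<dots> = 1/4" using a by simp
  finally show ?thesis unfolding y_def a_def by simp
qed

lemma K_bound:
  fixes y :: real assumes y: "y \<ge> 15"
  shows "(y * (y - 1) / 6) * (1 / (y - 2)) * (1/2 - (1 / (y - 2)) / 3) \<ge> 5/4"
proof -
  define t where "t = y - 15"
  have t: "t \<ge> 0" using y unfolding t_def by simp
  have pos: "y - 2 > 0" using y by simp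
  have "y * (y - 1) * (3 * y - 8) - 45 * (y - 2)^2 = 165 + 533 * t + 79 * t^2 + 3 * t^3"
    unfolding t_def by (simp add: algebra_simps power2_eq_square power3_eq_cube)
  also have "\<dots> \<ge> 0" using t by simp
  finally have main: "y * (y - 1) * (3 * y - 8) \<ge> 45 * (y - 2)^2" by simp
  have "(y * (y - 1) / 6) * (1 / (y - 2)) * (1/2 - (1 / (y - 2)) / 3)
      = y * (y - 1) * (3 * y - 8) / (36 * (y - 2)^2)"
    using pos by (simp add: field_simps power2_eq_square)
  also have "\<dots> \<ge> 45 * (y - 2)^2 / (36 * (y - 2)^2)"
    by (rule divide_right_mono) (use main pos in auto)
  also have "45 * (y - 2)^2 / (36 * (y - 2)^2) = 5/4" using pos by simp
  finally show ?thesis by simp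
qed

lemma term_bound:
  fixes n j :: nat assumes n: "n \<ge> 15" and j: "j + 3 \<le> n"
  shows "(real n + 1) ^ j * (real n - 2) ^ (((n - j) choose 2) div 3)
    \<le> (real n - 2) powr (real n * (real n - 1) / 6) * ((real n + 1) * (real n - 2) powr (- (real n + 2) / 6)) ^ j"
proof -
  define y where "y = real n"
  define jj where "jj = real j"
  define t where "t = ((n - j) choose 2) div 3"
  have y: "y \<ge> 15" using n unfolding y_def by simp
  have jj: "jj \<ge> 0" "jj + 3 \<le> y" using j unfolding jj_def y_def by auto
  have a: "y - 2 \<ge> 1" using y by simp
  have "6 * t \<le> (n - j) * (n - j - 1)"
  proof -
    have "3 * t \<le> (n - j) choose 2" unfolding t_def by simp
    also have "\<dots> = (n - j) * (n - j - 1) div 2" by (rule choose_two)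
    finally show ?thesis by linarith
  qed
  then have "real (6 * t) \<le> real ((n - j) * (n - j - 1))" by (simp only: of_nat_le_iff)
  then have "6 * real t \<le> real ((n - j) * (n - j - 1))" by simp
  also have "real ((n - j) * (n - j - 1)) = (y - jj) * (y - jj - 1)"
    using j unfolding y_def jj_def by (simp add: of_nat_diff)
  finally have t6: "6 * real t \<le> (y - jj) * (y - jj - 1)" .
  have "(y - jj) * (y - jj - 1) - (y * (y - 1) - jj * (y + 2)) = jj * (jj - y + 3)"
    by (simp add: algebra_simps)
  also have "\<dots> \<le> 0" using jj by (intro mult_nonneg_nonpos) auto
  finally have "real t \<le> y * (y - 1) / 6 + jj * (- (y + 2) / 6)" using t6 by (simp add: field_simps)
  then have "(y - 2) powr real t \<le> (y - 2) powr (y * (y - 1) / 6 + jj * (- (y + 2) / 6))"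
    by (rule powr_mono) (use a in auto)
  also have "\<dots> = (y - 2) powr (y * (y - 1) / 6) * ((y - 2) powr (- (y + 2) / 6)) ^ j"
  proof -
    have "((y - 2) powr (- (y + 2) / 6)) ^ j = ((y - 2) powr (- (y + 2) / 6)) powr jj"
      unfolding jj_def using a by (subst powr_realpow) auto
    also have "\<dots> = (y - 2) powr (jj * (- (y + 2) / 6))" by (simp add: powr_powr mult.commute)
    finally show ?thesis by (simp add: powr_add)
  qed
  finally have B: "(y - 2) ^ t \<le> (y - 2) powr (y * (y - 1) / 6) * ((y - 2) powr (- (y + 2) / 6)) ^ j"
    using a by (simp add: powr_realpow)
  have "(y + 1) ^ j * (y - 2) ^ t \<le> (y + 1) ^ j * ((y - 2) powr (y * (y - 1) / 6) * ((y - 2) powr (- (y + 2) / 6)) ^ j)"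
    by (rule mult_left_mono[OF B]) (use y in simp)
  also have "\<dots> = (y - 2) powr (y * (y - 1) / 6) * ((y + 1) * (y - 2) powr (- (y + 2) / 6)) ^ j"
    by (simp add: power_mult_distrib)
  finally show ?thesis unfolding y_def t_def .
qed

lemma sum_pow_card:
  fixes x :: real assumes A: "finite A"
  shows "(\<Sum>S\<in>Pow A. x ^ card S) = (1 + x) ^ card A"
proof -
  have "(1 + x) ^ card A = (\<Prod>a\<in>A. x + 1)" by (simp add: add.commute)
  also have "\<dots> = (\<Sum>S\<in>Pow A. (\<Prod>a\<in>S. x) * (\<Prod>a\<in>A - S. 1))" by (rule prod_add[OF A])
  also have "\<dots> = (\<Sum>S\<in>Pow A. x ^ card S)" by simp
  finally show ?thesis by simp
qed

lemma space_bound: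
  assumes fin: "finite E" and cE: "card E = n" and n: "n \<ge> 15"
  shows "real (card (Space E)) \<le> (1 + 1 / (real n - 2)) ^ (n choose 3) * (real n - 2) powr (real n * (real n - 1) / 6)
          * (1 + (real n + 1) * (real n - 2) powr (- (real n + 2) / 6)) ^ n"
proof -
  define x where "x = 1 / (real n - 2)"
  define q where "q = (real n + 1) * (real n - 2) powr (- (real n + 2) / 6)"
  define P where "P = (real n - 2) powr (real n * (real n - 1) / 6)"
  define N where "N = n choose 3"
  define Js where "Js = {J. J \<subseteq> E \<and> card J + 3 \<le> card E}"
  define Ts where "Ts J = {T. T \<subseteq> V3 E \<and> 3 * card T \<le> (card E - card J) choose 2}" for J :: "nat set"
  have x: "0 < x" "x \<le> 1" using n unfolding x_def by auto
  have finJs: "finite Js" unfolding Js_def using fin by simp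
  have finV3: "finite (V3 E)" unfolding V3_def using fin by simp
  have cV3: "card (V3 E) = N" unfolding V3_def N_def using n_subsets[OF fin, of 3] cE by simp
  have finTs: "finite (Ts J)" for J unfolding Ts_def using finV3 by simp
  have cO: "card (insert None (Some ` E)) = n + 1"
    using cE fin by (simp add: card_image)
  have finPi: "finite (J \<rightarrow>\<^sub>E insert None (Some ` E))" if "J \<in> Js" for J
    using that fin unfolding Js_def by (intro finite_PiE) (auto intro: finite_subset)
  have cPi: "card (J \<rightarrow>\<^sub>E insert None (Some ` E)) = (n + 1) ^ card J" if "J \<in> Js" for J
    using that fin cO unfolding Js_def by (subst card_PiE) (auto intro: finite_subset)
  have "card (Space E) = (\<Sum>J\<in>Js. card ((J \<rightarrow>\<^sub>E insert None (Some ` E)) \<times> Ts J))"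
    unfolding Space_def Js_def[symmetric] Ts_def[symmetric]
    by (rule card_SigmaI[OF finJs]) (use finPi finTs in auto)
  also have "\<dots> = (\<Sum>J\<in>Js. (n + 1) ^ card J * card (Ts J))"
    by (rule sum.cong) (simp_all add: card_cartesian_product cPi)
  finally have cS: "real (card (Space E)) = (\<Sum>J\<in>Js. real ((n + 1) ^ card J) * real (card (Ts J)))"
    by simp
  have tb: "real ((n + 1) ^ card J) * real (card (Ts J)) \<le> (1 + x) ^ N * P * q ^ card J" if J: "J \<in> Js" for J
  proof -
    define t where "t = ((n - card J) choose 2) div 3"
    have "Ts J \<subseteq> {T. T \<subseteq> V3 E \<and> card T \<le> t}" unfolding Ts_def t_def cE by auto
    then have "card (Ts J) \<le> card {T. T \<subseteq> V3 E \<and> card T \<le> t}"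
      by (rule card_mono[rotated]) (use finV3 in simp)
    then have "real (card (Ts J)) * x ^ t \<le> (1 + x) ^ N"
      using subsets_bound[OF finV3 x, of t] cV3
      by (smt (verit) mult_right_mono of_nat_le_iff x(1) zero_le_power)
    then have c1: "real (card (Ts J)) \<le> (1 + x) ^ N * (real n - 2) ^ t"
      using x(1) unfolding x_def by (simp add: field_simps power_one_over)
    have j3: "card J + 3 \<le> n" using J cE unfolding Js_def by simp
    have "real ((n + 1) ^ card J) * real (card (Ts J)) \<le> (real n + 1) ^ card J * ((1 + x) ^ N * (real n - 2) ^ t)"
      using mult_left_mono[OF c1, of "(real n + 1) ^ card J"] by (simp add: add.commute)
    also have "\<dots> = (1 + x) ^ N * ((real n + 1) ^ card J * (real n - 2) ^ t)" by simp
    also have "\<dots> \<le> (1 + x) ^ N * (P * q ^ card J)"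
      using term_bound[OF n j3] x(1) unfolding P_def q_def t_def by (intro mult_left_mono) auto
    finally show ?thesis by simp
  qed
  have qpos: "q \<ge> 0" unfolding q_def using n by simp
  have "real (card (Space E)) \<le> (\<Sum>J\<in>Js. (1 + x) ^ N * P * q ^ card J)"
    unfolding cS by (rule sum_mono) (rule tb)
  also have "\<dots> = (1 + x) ^ N * P * (\<Sum>J\<in>Js. q ^ card J)" by (simp add: sum_distrib_left)
  also have "\<dots> \<le> (1 + x) ^ N * P * (\<Sum>J\<in>Pow E. q ^ card J)"
    by (intro mult_left_mono sum_mono2) (use fin qpos x in \<open>auto simp: Js_def P_def\<close>)
  also have "\<dots> = (1 + x) ^ N * P * (1 + q) ^ n" using sum_pow_card[OF fin] cE by simp
  finally show ?thesis unfolding x_def P_def q_def N_def .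
qed

lemma choose3_real: "real (n choose 3) = real n * (real n - 1) * (real n - 2) / 6"
proof (cases "n \<ge> 3")
  case True
  have "real (n choose 3) = (real n gchoose 3)" by (simp add: binomial_gbinomial)
  also have "\<dots> = real n * (real n - 1) * (real n - 2) / 6"
    by (simp add: gbinomial_prod_rev numeral_eq_Suc atLeast0LessThan lessThan_Suc algebra_simps)
  finally show ?thesis .
next
  case False
  then have "n = 0 \<or> n = 1 \<or> n = 2" by auto
  then show ?thesis by auto
qed

lemma rank3:
  assumes fin: "finite E" and cE: "card E = n" and n: "n \<ge> 15"
  shows "ln (real (mc E 3 + 1)) \<le> real (n choose 3) / real (n - 2) * ln (exp 1 * real (n - 2))"
proof -
  define y where "y = real n"
  have y: "y \<ge> 15" using n unfolding y_def by simp
  define K where "K = y * (y - 1) / 6"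
  define x where "x = 1 / (y - 2)"
  define q where "q = (y + 1) * (y - 2) powr (- (y + 2) / 6)"
  define P where "P = (y - 2) powr K"
  define N where "N = n choose 3"
  have x: "x > 0" "x \<le> 1" using y unfolding x_def by auto
  have n2: "real (n - 2) = y - 2" using n unfolding y_def by (simp add: of_nat_diff)
  have NK: "real N * x = K" unfolding N_def K_def x_def y_def choose3_real using n by (simp add: field_simps)
  have Kpos: "K \<ge> 1"
  proof -
    have "15 * 14 \<le> y * (y - 1)" using mult_mono[of 15 y 14 "y - 1"] y by simp
    then show ?thesis unfolding K_def by simp
  qed
  have SB: "real (card (Space E)) \<le> (1 + x) ^ N * P * (1 + q) ^ n"
    using space_bound[OF fin cE n] unfolding x_def P_def q_def N_def K_def y_def .
  have A: "(1 + x) ^ N \<le> exp (K - K * x / 2 + K * x^2 / 3)"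
  proof -
    have "(1 + x) ^ N = exp (real N * ln (1 + x))"
      using x by (simp add: exp_of_nat_mult)
    also have "\<dots> \<le> exp (real N * (x - x^2/2 + x^3/3))"
      using ln_cubic[of x] x by (subst exp_le_cancel_iff) (intro mult_left_mono; auto)
    also have "real N * (x - x^2/2 + x^3/3) = K - K * x / 2 + K * x^2 / 3"
      using NK by (simp add: algebra_simps power2_eq_square power3_eq_cube)
    finally show ?thesis .
  qed
  have nq: "real n * q \<le> 1/4" using nq_bound[OF n] unfolding q_def y_def by (simp add: mult.assoc)
  have qpos: "q \<ge> 0" unfolding q_def using y by simp
  have Bq: "(1 + q) ^ n \<le> exp (1/4)"
  proof -
    have "(1 + q) ^ n \<le> exp q ^ n" by (intro power_mono) (use qpos exp_ge_add_one_self[of q] in auto)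
    also have "\<dots> = exp (real n * q)" by (simp add: exp_of_nat_mult)
    also have "\<dots> \<le> exp (1/4)" using nq by simp
    finally show ?thesis .
  qed
  have KB: "K * x / 2 - K * x^2 / 3 \<ge> 5/4"
  proof -
    have "K * x * (1/2 - x/3) \<ge> 5/4" using K_bound[OF y] unfolding K_def x_def .
    moreover have "K * x / 2 - K * x^2 / 3 = K * x * (1/2 - x/3)" by (simp add: algebra_simps power2_eq_square)
    ultimately show ?thesis by simp
  qed
  have Ppos: "P \<ge> 1" unfolding P_def using y Kpos by (intro ge_one_powr_ge_zero) auto
  have "(1 + x) ^ N * (1 + q) ^ n \<le> exp (K - K * x / 2 + K * x^2 / 3) * exp (1/4)"
    by (intro mult_mono A Bq) (use qpos in auto)
  also have "\<dots> = exp (K - K * x / 2 + K * x^2 / 3 + 1/4)" by (simp add: exp_add)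
  also have "\<dots> \<le> exp (K - 1)" using KB by simp
  finally have E1: "(1 + x) ^ N * (1 + q) ^ n \<le> exp (K - 1)" .
  have "real (mc E 3 + 1) \<le> real (card (Space E)) + 1" using mc3_le[OF fin] by simp
  also have "\<dots> \<le> (1 + x) ^ N * (1 + q) ^ n * P + 1" using SB by (simp add: algebra_simps)
  also have "\<dots> \<le> exp (K - 1) * P + 1" using E1 Ppos by (intro add_right_mono mult_right_mono) auto
  also have "\<dots> \<le> exp K * P"
  proof -
    have e1: "exp (K - 1) \<ge> 1" using Kpos by simp
    have "exp K = exp (K - 1) * exp 1" by (simp add: exp_add[symmetric])
    moreover have "exp (1::real) \<ge> 2" using exp_ge_add_one_self[of 1] by simp
    ultimately have "exp K \<ge> exp (K - 1) * 2" using e1 by (simp add: mult_left_mono)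
    then have "exp K \<ge> exp (K - 1) + 1" using e1 by linarith
    then have "exp K * P \<ge> (exp (K - 1) + 1) * P" using Ppos by (intro mult_right_mono) auto
    also have "(exp (K - 1) + 1) * P \<ge> exp (K - 1) * P + 1" using Ppos by (simp add: algebra_simps)
    finally show ?thesis by simp
  qed
  finally have M: "real (mc E 3 + 1) \<le> exp K * P" .
  have "ln (real (mc E 3 + 1)) \<le> ln (exp K * P)"
    using M Ppos by (subst ln_le_cancel_iff) auto
  also have "\<dots> = K + K * ln (y - 2)" unfolding P_def using y by (simp add: ln_mult ln_powr)
  also have "\<dots> = K * ln (exp 1 * (y - 2))"
  proof -
    have "ln (exp 1 * (y - 2)) = 1 + ln (y - 2)" using y by (subst ln_mult) auto
    then show ?thesis by (simp add: algebra_simps)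
  qed
  also have "K = real (n choose 3) / real (n - 2)" unfolding K_def n2 choose3_real y_def
    using n by (simp add: field_simps)
  finally show ?thesis using n2 by simp
qed



lemma main_ind:
  assumes c: "c \<ge> 12" and r: "r \<ge> 3"
  shows "finite E \<Longrightarrow> card E = r + c \<Longrightarrow>
    ln (real (mc E r + 1)) \<le> real ((r + c) choose r) / real (c + 1) * ln (exp 1 * real (c + 1))"
  using r
proof (induction r arbitrary: E rule: dec_induct)
  case base
  have "ln (real (mc E 3 + 1)) \<le> real ((3 + c) choose 3) / real (3 + c - 2) * ln (exp 1 * real (3 + c - 2))"
    using rank3[of E "3 + c"] base c by simp
  moreover have "3 + c - 2 = c + 1" by simp
  ultimately show ?case by simp
next
  case (step r)
  let ?L = "real ((r + c) choose r) / real (c + 1) * ln (exp 1 * real (c + 1))"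
  have IH: "ln (real (mc (E - {x}) r + 1)) \<le> ?L" if "x \<in> E" for x
    using step.IH[of "E - {x}"] step.prems that by simp
  have sh: "real (mc E (Suc r) + 1) ^ Suc r \<le> (\<Prod>x\<in>E. real (mc (E - {x}) r + 1))"
    using shearer_step[OF step.prems(1), of "Suc r"] by simp
  have pos: "\<And>x. real (mc (E - {x}) r + 1) > 0" by simp
  have "real (Suc r) * ln (real (mc E (Suc r) + 1)) = ln (real (mc E (Suc r) + 1) ^ Suc r)"
    by (rule ln_realpow[symmetric])
  also have "\<dots> \<le> ln (\<Prod>x\<in>E. real (mc (E - {x}) r + 1))"
    using sh by (subst ln_le_cancel_iff) (auto intro: prod_pos)
  also have "\<dots> = (\<Sum>x\<in>E. ln (real (mc (E - {x}) r + 1)))"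
    by (rule ln_prod) (use step.prems(1) in auto)
  also have "\<dots> \<le> (\<Sum>x\<in>E. ?L)" by (rule sum_mono) (use IH in auto)
  also have "\<dots> = real (Suc r + c) * ?L" using step.prems by simp
  finally have A: "real (Suc r) * ln (real (mc E (Suc r) + 1)) \<le> real (Suc r + c) * ?L" .
  have bin: "real (Suc r + c) * real ((r + c) choose r) = real (Suc r) * real ((Suc r + c) choose Suc r)"
  proof -
    have "Suc (r + c) * ((r + c) choose r) = (Suc (r + c) choose Suc r) * Suc r"
      by (rule Suc_times_binomial_eq)
    then show ?thesis by (simp only: of_nat_mult[symmetric]) (simp add: mult.commute)
  qed
  have eqL: "real (Suc r + c) * ?L = real (Suc r) * (real ((Suc r + c) choose Suc r) / real (c + 1) * ln (exp 1 * real (c + 1)))"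
  proof -
    have gen: "(a::real) * (b / d * l) = (a * b) / d * l" for a b d l by simp
    show ?thesis by (simp only: gen bin)
  qed
  from A[unfolded eqL] have "real (Suc r) * ln (real (mc E (Suc r) + 1))
     \<le> real (Suc r) * (real ((Suc r + c) choose Suc r) / real (c + 1) * ln (exp 1 * real (c + 1)))" .
  then show ?case by (subst (asm) mult_le_cancel_left_pos) auto
qed

theorem theorem1p5:
  fixes n r :: nat
  assumes "r \<ge> 3" and "n \<ge> r + 12"
  shows "log 2 (real (matroid_count n r))
           \<le> (1 / real (n - r + 1)) * real (n choose r) * log 2 (exp 1 * real (n - r + 1))"
proof -
  define c where "c = n - r"
  have c: "c \<ge> 12" "n = r + c" using assms unfolding c_def by auto
  have M: "ln (real (mc {1..n} r + 1)) \<le> real (n choose r) / real (c + 1) * ln (exp 1 * real (c + 1))"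
    using main_ind[OF c(1) assms(1), of "{1..n}"] c(2) by simp
  have e1: "exp 1 * real (c + 1) \<ge> 1"
  proof -
    have "exp (1::real) \<ge> 1" by simp
    moreover have "real (c + 1) \<ge> 1" by simp
    ultimately show ?thesis using mult_mono[of 1 "exp 1" 1 "real (c+1)"] by simp
  qed
  have nr: "n - r + 1 = c + 1" unfolding c_def ..
  have R: "(1 / real (n - r + 1)) * real (n choose r) * log 2 (exp 1 * real (n - r + 1))
     = (real (n choose r) / real (c + 1) * ln (exp 1 * real (c + 1))) / ln 2"
    unfolding nr log_def by simp
  show ?thesis
  proof (cases "matroid_count n r = 0")
    case True
    have "0 \<le> real (n choose r) / real (c + 1) * ln (exp 1 * real (c + 1)) / ln 2"
      using e1 by (intro divide_nonneg_pos mult_nonneg_nonneg) auto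
    then show ?thesis using True R by (simp add: log_def)
  next
    case False
    have "ln (real (matroid_count n r)) \<le> ln (real (mc {1..n} r + 1))"
      using False unfolding matroid_count_mc by simp
    also note M
    finally have "ln (real (matroid_count n r)) / ln 2 \<le> (real (n choose r) / real (c + 1) * ln (exp 1 * real (c + 1))) / ln 2"
      by (intro divide_right_mono) auto
    then show ?thesis unfolding R by (simp add: log_def)
  qed
qed


end
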